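(* If a state over time function $\star$ satisfies axiom (E), then it is state-linear, i.e. linear in its second argument.
   Context: Systems are finite-dimensional Hilbert spaces; $\mathfrak{B}(A)$ linear operators, $\mathfrak{S}(A)$ density operators, $\mathfrak{C}(A,B)$ quantum channels (CPTP maps $\mathfrak{B}(A)\to\mathfrak{B}(B)$). A state over time function assigns to all systems $A,B$ a map $\star:\mathfrak{C}(A,B)\times\mathfrak{S}(A)\to\mathfrak{B}(A\otimes B)$, $(\mathcal{E},\rho)\mapsto\mathcal{E}_{B|A}\star\rho_A$, with $\mathrm{Tr}_A[\mathcal{E}\star\rho]=\mathcal{E}(\rho)$ and $\mathrm{Tr}_B[\mathcal{E}\star\rho]=\rho$, extended homogeneously by $(\lambda\mathcal{E})\star\rho=\mathcal{E}\star(\lambda\rho)=\lambda(\mathcal{E}\star\rho)$, $\lambda\in\mathbb{C}$. It is state-linear if it is linear in the second argument. A quantum state over spacetime on $A\otimes E$ is either a density operator on $A\otimes E$ or an operator of the form $\mathcal{F}\star\sigma$. Axiom (E): for all systems $A,B,E$, every quantum state over spacetime $\rho_{AE}$ and every channel $\mathcal{E}_{B|A}$, an operator $\mathcal{E}_{B|A}\star\rho_{AE}$ on $A\otimes B\otimes E$ is defined such that for every completely positive trace-non-increasing map $\mathcal{I}_E$ on $E$, $\mathcal{I}_E[\mathcal{E}_{B|A}\star\rho_{AE}]=\mathcal{E}_{B|A}\star\mathcal{I}_E(\rho_{AE})$, and $\mathrm{Tr}_A[\mathcal{E}_{B|A}\star\rho_{AE}]=(\mathcal{E}_{B|A}\otimes\mathrm{id}_E)(\rho_{AE})$.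 *)

theory Defs
  imports "Jordan_Normal_Form.Matrix" Complex_Main
begin

text \<open>A system is a finite-dimensional Hilbert space C^d with d > 0; operators on it are
  complex d x d matrices.  The tensor product A \<otimes> R is C^(dA*dR) with the
  Kronecker index convention  (a, r) \<mapsto> a*dR + r.  Maps between operator spaces
  are HOL functions on matrices; only their values on the relevant carrier matter.\<close>

type_synonym opmap = "complex mat \<Rightarrow> complex mat"

definition tr :: "complex mat \<Rightarrow> complex" where
  "tr X = (\<Sum>i<dim_row X. X $$ (i, i))"

definition psd :: "nat \<Rightarrow> complex mat \<Rightarrow> bool" where
  "psd d X \<longleftrightarrow> X \<in> carrier_mat d d \<and>
     (\<forall>v :: nat \<Rightarrow> complex. let q = (\<Sum>i<d. \<Sum>j<d. cnj (v i) * X $$ (i, j) * v j)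
        in Im q = 0 \<and> Re q \<ge> 0)"

definition density :: "nat \<Rightarrow> complex mat \<Rightarrow> bool" where
  "density d \<rho> \<longleftrightarrow> psd d \<rho> \<and> tr \<rho> = 1"

definition rblock :: "nat \<Rightarrow> complex mat \<Rightarrow> nat \<Rightarrow> nat \<Rightarrow> complex mat" where
  "rblock dR X i j = mat dR dR (\<lambda>(k, l). X $$ (i * dR + k, j * dR + l))"

definition lblock :: "nat \<Rightarrow> nat \<Rightarrow> complex mat \<Rightarrow> nat \<Rightarrow> nat \<Rightarrow> complex mat" where
  "lblock dA dR X r s = mat dA dA (\<lambda>(a, b). X $$ (a * dR + r, b * dR + s))"

text \<open>(id_A \<otimes> \<Phi>)(X) for \<Phi> : R \<rightarrow> R', X on A \<otimes> R.\<close>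
definition app_right :: "nat \<Rightarrow> nat \<Rightarrow> nat \<Rightarrow> opmap \<Rightarrow> complex mat \<Rightarrow> complex mat" where
  "app_right dA dR dR' \<Phi> X = mat (dA * dR') (dA * dR')
     (\<lambda>(p, q). \<Phi> (rblock dR X (p div dR') (q div dR')) $$ (p mod dR', q mod dR'))"

text \<open>(\<Phi> \<otimes> id_R)(X) for \<Phi> : A \<rightarrow> B, X on A \<otimes> R.\<close>
definition app_left :: "nat \<Rightarrow> nat \<Rightarrow> nat \<Rightarrow> opmap \<Rightarrow> complex mat \<Rightarrow> complex mat" where
  "app_left dA dB dR \<Phi> X = mat (dB * dR) (dB * dR)
     (\<lambda>(p, q). \<Phi> (lblock dA dR X (p mod dR) (q mod dR)) $$ (p div dR, q div dR))"

definition ptrace_left :: "nat \<Rightarrow> nat \<Rightarrow> complex mat \<Rightarrow> complex mat" where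
  "ptrace_left dA dR X = mat dR dR (\<lambda>(k, l). \<Sum>i<dA. X $$ (i * dR + k, i * dR + l))"

definition ptrace_right :: "nat \<Rightarrow> nat \<Rightarrow> complex mat \<Rightarrow> complex mat" where
  "ptrace_right dA dR X = mat dA dA (\<lambda>(i, j). \<Sum>k<dR. X $$ (i * dR + k, j * dR + k))"

definition lin_on :: "nat \<Rightarrow> opmap \<Rightarrow> bool" where
  "lin_on d \<Phi> \<longleftrightarrow> (\<forall>X \<in> carrier_mat d d. \<forall>Y \<in> carrier_mat d d. \<Phi> (X + Y) = \<Phi> X + \<Phi> Y)
     \<and> (\<forall>X \<in> carrier_mat d d. \<forall>c. \<Phi> (c \<cdot>\<^sub>m X) = c \<cdot>\<^sub>m \<Phi> X)"

definition cp_map :: "nat \<Rightarrow> nat \<Rightarrow> opmap \<Rightarrow> bool" where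
  "cp_map dA dB \<Phi> \<longleftrightarrow> lin_on dA \<Phi> \<and> (\<forall>X \<in> carrier_mat dA dA. \<Phi> X \<in> carrier_mat dB dB) \<and>
     (\<forall>k>0. \<forall>X. psd (k * dA) X \<longrightarrow> psd (k * dB) (app_right k dA dB \<Phi> X))"

definition channel :: "nat \<Rightarrow> nat \<Rightarrow> opmap \<Rightarrow> bool" where
  "channel dA dB \<Phi> \<longleftrightarrow> cp_map dA dB \<Phi> \<and> (\<forall>X \<in> carrier_mat dA dA. tr (\<Phi> X) = tr X)"

definition cptni :: "nat \<Rightarrow> nat \<Rightarrow> opmap \<Rightarrow> bool" where
  "cptni dA dB \<Phi> \<longleftrightarrow> cp_map dA dB \<Phi> \<and> (\<forall>X. psd dA X \<longrightarrow> Re (tr (\<Phi> X)) \<le> Re (tr X))"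

text \<open>A state over time function: star dA dB \<E> \<rho> = \<E>_{B|A} \<star> \<rho>_A, an operator on A \<otimes> B.\<close>
type_synonym sotf = "nat \<Rightarrow> nat \<Rightarrow> opmap \<Rightarrow> complex mat \<Rightarrow> complex mat"

definition state_over_time_fun :: "sotf \<Rightarrow> bool" where
  "state_over_time_fun star \<longleftrightarrow> (\<forall>dA dB \<E> \<rho>. dA > 0 \<longrightarrow> dB > 0 \<longrightarrow> channel dA dB \<E> \<longrightarrow> density dA \<rho> \<longrightarrow>
      star dA dB \<E> \<rho> \<in> carrier_mat (dA * dB) (dA * dB) \<and>
      ptrace_left dA dB (star dA dB \<E> \<rho>) = \<E> \<rho> \<and>
      ptrace_right dA dB (star dA dB \<E> \<rho>) = \<rho>)"

text \<open>Homogeneous extension: (\<lambda>\<E>) \<star> \<rho> = \<E> \<star> (\<lambda>\<rho>) = \<lambda>(\<E> \<star> \<rho>).  On the second argument it is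
  defined on scalar multiples of states.  State-linearity: this extension is linear,
  i.e. it is the restriction of a linear map on B(A).\<close>
definition state_linear :: "sotf \<Rightarrow> bool" where
  "state_linear star \<longleftrightarrow> (\<forall>dA dB \<E>. dA > 0 \<longrightarrow> dB > 0 \<longrightarrow> channel dA dB \<E> \<longrightarrow>
     (\<exists>L. lin_on dA L \<and> (\<forall>\<rho> c. density dA \<rho> \<longrightarrow> L (c \<cdot>\<^sub>m \<rho>) = c \<cdot>\<^sub>m star dA dB \<E> \<rho>)))"

definition qsst :: "sotf \<Rightarrow> nat \<Rightarrow> nat \<Rightarrow> complex mat \<Rightarrow> bool" where
  "qsst star dA dE X \<longleftrightarrow> density (dA * dE) X \<or>
     (\<exists>\<F> \<sigma>. channel dA dE \<F> \<and> density dA \<sigma> \<and> X = star dA dE \<F> \<sigma>)"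

text \<open>Axiom (E).  ext dA dB dE \<E> X = \<E>_{B|A} \<star> X_{AE}, an operator on A \<otimes> B \<otimes> E
  (ordered as (A \<otimes> B) \<otimes> E).  For a trivial system E (dimension 1, A \<otimes> E = A) it is the
  given (homogeneously extended) state over time function.\<close>
definition axiom_E :: "sotf \<Rightarrow> (nat \<Rightarrow> nat \<Rightarrow> nat \<Rightarrow> opmap \<Rightarrow> complex mat \<Rightarrow> complex mat) \<Rightarrow> bool" where
  "axiom_E star ext \<longleftrightarrow>
    (\<forall>dA dB \<E> \<rho> c. dA > 0 \<longrightarrow> dB > 0 \<longrightarrow> channel dA dB \<E> \<longrightarrow> density dA \<rho> \<longrightarrow>
        ext dA dB 1 \<E> (c \<cdot>\<^sub>m \<rho>) = c \<cdot>\<^sub>m star dA dB \<E> \<rho>) \<and>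
    (\<forall>dA dB dE \<E> X. dA > 0 \<longrightarrow> dB > 0 \<longrightarrow> dE > 0 \<longrightarrow> channel dA dB \<E> \<longrightarrow> qsst star dA dE X \<longrightarrow>
        ext dA dB dE \<E> X \<in> carrier_mat (dA * dB * dE) (dA * dB * dE) \<and>
        (\<forall>dE' \<I>. dE' > 0 \<longrightarrow> cptni dE dE' \<I> \<longrightarrow>
           app_right (dA * dB) dE dE' \<I> (ext dA dB dE \<E> X)
             = ext dA dB dE' \<E> (app_right dA dE dE' \<I> X)) \<and>
        ptrace_left dA (dB * dE) (ext dA dB dE \<E> X) = app_left dA dB dE \<E> X)"

end

theory Submission
  imports Defs
begin

definition qf :: "nat \<Rightarrow> (nat \<Rightarrow> nat \<Rightarrow> complex) \<Rightarrow> (nat \<Rightarrow> complex) \<Rightarrow> complex" where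
  "qf n m v = (\<Sum>a<n. \<Sum>b<n. cnj (v a) * m a b * v b)"

definition psdf :: "nat \<Rightarrow> (nat \<Rightarrow> nat \<Rightarrow> complex) \<Rightarrow> bool" where
  "psdf n m \<longleftrightarrow> (\<forall>v. 0 \<le> qf n m v)"

lemma psd_iff: "psd d X \<longleftrightarrow> X \<in> carrier_mat d d \<and> psdf d (\<lambda>a b. X $$ (a, b))"
  unfolding psd_def psdf_def qf_def Let_def less_eq_complex_def by auto

lemma qf_add_delta:
  assumes k: "k < n"
  shows "qf n m (\<lambda>a. v a + t * (if a = k then 1 else 0)) =
    qf n m v + cnj t * (\<Sum>b<n. m k b * v b) + t * (\<Sum>a<n. cnj (v a) * m a k) + cnj t * t * m k k"
proof -
  have e: "\<And>a b. cnj (v a + t * (if a = k then 1 else 0)) * m a b * (v b + t * (if b = k then 1 else 0)) =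
     cnj (v a) * m a b * v b + (if b = k then cnj (v a) * m a k * t else 0)
     + (if a = k then cnj t * (m k b * v b) else 0) + (if a = k then (if b = k then cnj t * t * m k k else 0) else 0)"
    by (auto simp: algebra_simps)
  have s1: "(\<Sum>a<n. \<Sum>b<n. (if b = k then cnj (v a) * m a k * t else 0)) = t * (\<Sum>a<n. cnj (v a) * m a k)"
    using k by (simp add: sum_distrib_left algebra_simps)
  have s2: "(\<Sum>a<n. \<Sum>b<n. (if a = k then cnj t * (m k b * v b) else 0)) = cnj t * (\<Sum>b<n. m k b * v b)"
    using k by (subst sum.swap) (simp add: sum_distrib_left)
  have s3': "\<And>a. (\<Sum>b<n. (if a = k then (if b = k then cnj t * t * m k k else 0) else 0)) = (if a = k then cnj t * t * m k k else 0)"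
    using k by auto
  have s3: "(\<Sum>a<n. \<Sum>b<n. (if a = k then (if b = k then cnj t * t * m k k else 0) else 0)) = cnj t * t * m k k"
    unfolding s3' using k by simp
  show ?thesis unfolding qf_def e sum.distrib s1 s2 s3 by simp
qed

definition dl :: "nat \<Rightarrow> nat \<Rightarrow> complex" where "dl k x = (if x = k then 1 else 0)"

lemma qf2:
  assumes "a < n" "b < n"
  shows "qf n m (\<lambda>x. dl a x + t * dl b x) = m a a + cnj t * m b a + t * m a b + cnj t * t * m b b"
proof -
  have 0: "qf n m (\<lambda>x. 0) = 0" unfolding qf_def by simp
  have 1: "qf n m (dl a) = m a a"
    using qf_add_delta[OF assms(1), of m "\<lambda>x. 0" 1] assms unfolding 0 dl_def by simp
  have e1: "\<And>x. m b x * dl a x = (if x = a then m b a else 0)"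
    "\<And>x. cnj (dl a x) * m x b = (if x = a then m a b else 0)" by (auto simp: dl_def)
  have e2: "(\<lambda>x. dl a x + t * (if x = b then 1 else 0)) = (\<lambda>x. dl a x + t * dl b x)"
    by (auto simp: dl_def)
  show ?thesis
    using qf_add_delta[OF assms(2), of m "dl a" t] assms unfolding 1 e1 e2
    by simp
qed

lemma psdf_diag: assumes "psdf n m" "a < n" shows "0 \<le> m a a"
proof -
  have "0 \<le> qf n m (\<lambda>x. dl a x + 0 * dl a x)" using assms(1) unfolding psdf_def by blast
  then show ?thesis unfolding qf2[OF assms(2) assms(2)] by simp
qed

lemma psdf_herm: assumes "psdf n m" "a < n" "b < n" shows "m b a = cnj (m a b)"
proof -
  have d1: "0 \<le> m a a" "0 \<le> m b b" using psdf_diag assms by auto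
  have p1: "0 \<le> qf n m (\<lambda>x. dl a x + 1 * dl b x)" "0 \<le> qf n m (\<lambda>x. dl a x + \<i> * dl b x)"
    using assms(1) unfolding psdf_def by auto
  note p1 = p1[unfolded qf2[OF assms(2,3)]]
  have i1: "Im (m b a) + Im (m a b) = 0" using p1(1) d1 by (simp add: less_eq_complex_def)
  have i2: "Re (m a b) - Re (m b a) = 0" using p1(2) d1 by (simp add: less_eq_complex_def)
  show ?thesis using i1 i2 by (simp add: complex_eq_iff)
qed

lemma psdf_zero: assumes "psdf n m" "k < n" "b < n" "m k k = 0" shows "m k b = 0"
proof (rule ccontr)
  assume nz: "m k b \<noteq> 0"
  define z where "z = m k b"
  have h: "m b k = cnj z" using psdf_herm assms unfolding z_def by auto
  have db: "0 \<le> m b b" using psdf_diag assms by auto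
  have pos: "Re z ^ 2 + Im z ^ 2 > 0" using nz unfolding z_def
    by (metis complex_eq_iff sum_power2_gt_zero_iff zero_complex.simps(1) zero_complex.simps(2))
  define x where "x = (Re (m b b) + 1) / (2 * (Re z ^ 2 + Im z ^ 2))"
  define t where "t = - (of_real x * z)"
  have p: "0 \<le> qf n m (\<lambda>y. dl b y + t * dl k y)"
    using assms(1) unfolding psdf_def by blast
  have p2: "0 \<le> m b b + cnj t * z + t * cnj z"
    using p unfolding qf2[OF assms(3,2)] h assms(4) z_def by simp
  have r: "Re (cnj t * z + t * cnj z) = - (2 * x * (Re z ^ 2 + Im z ^ 2))"
    unfolding t_def by (simp add: power2_eq_square algebra_simps)
  have "Re (m b b) + Re (cnj t * z + t * cnj z) \<ge> 0"
    using p2 by (simp add: less_eq_complex_def)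
  moreover have "2 * x * (Re z ^ 2 + Im z ^ 2) = Re (m b b) + 1" unfolding x_def using pos by (simp add: field_simps)
  ultimately show False unfolding r by simp
qed

lemma chol_aux:
  assumes "k \<le> n" "psdf n m" "\<forall>a b. a < n \<longrightarrow> b < n \<longrightarrow> (k \<le> a \<or> k \<le> b) \<longrightarrow> m a b = 0"
  shows "\<exists>u. \<forall>a<n. \<forall>b<n. m a b = (\<Sum>i<k. u i a * cnj (u i b))"
using assms proof (induction k arbitrary: m)
  case 0 then show ?case by auto
next
  case (Suc k)
  have kn: "k < n" using Suc.prems by simp
  have herm: "\<And>a b. a<n \<Longrightarrow> b<n \<Longrightarrow> m b a = cnj (m a b)" using psdf_herm Suc.prems(2) by blast
  show ?case
  proof (cases "m k k = 0")
    case True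
    have z: "\<forall>a b. a < n \<longrightarrow> b < n \<longrightarrow> (k \<le> a \<or> k \<le> b) \<longrightarrow> m a b = 0"
    proof (intro allI impI)
      fix a b assume ab: "a < n" "b < n" "k \<le> a \<or> k \<le> b"
      show "m a b = 0"
      proof (cases "a = k")
        case True then show ?thesis using psdf_zero[OF Suc.prems(2) kn ab(2)] \<open>m k k = 0\<close> by simp
      next
        case na: False
        show ?thesis
        proof (cases "b = k")
          case True
          have "m k a = 0" using psdf_zero[OF Suc.prems(2) kn ab(1)] \<open>m k k = 0\<close> by simp
          then show ?thesis using herm[OF kn ab(1)] True by simp
        next
          case False then show ?thesis using Suc.prems(3) ab na by auto
        qed
      qed
    qed
    obtain u where u: "\<forall>a<n. \<forall>b<n. m a b = (\<Sum>i<k. u i a * cnj (u i b))"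
      using Suc.IH[OF _ Suc.prems(2) z] kn by auto
    define u' where "u' = u(k := (\<lambda>_. 0))"
    have e: "\<And>a b. (\<Sum>i<k. u' i a * cnj (u' i b)) = (\<Sum>i<k. u i a * cnj (u i b))"
      unfolding u'_def by (rule sum.cong) auto
    have uk: "u' k = (\<lambda>_. 0)" unfolding u'_def by simp
    have "\<forall>a<n. \<forall>b<n. m a b = (\<Sum>i<Suc k. u' i a * cnj (u' i b))"
      using u by (simp add: e uk)
    then show ?thesis by blast
  next
    case False
    have d: "0 \<le> m k k" using psdf_diag Suc.prems(2) kn by auto
    define r where "r = sqrt (Re (m k k))"
    have rpos: "r > 0" using d False unfolding r_def by (auto simp: less_eq_complex_def complex_eq_iff)
    have mkk: "m k k = of_real (r^2)" using d unfolding r_def by (simp add: less_eq_complex_def complex_eq_iff)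
    define w where "w a = m a k / of_real r" for a
    define m' where "m' a b = m a b - w a * cnj (w b)" for a b
    have psd': "psdf n m'"
      unfolding psdf_def
    proof
      fix v
      define s where "s = (\<Sum>a<n. cnj (v a) * w a)"
      define t where "t = - cnj s / of_real r"
      have q': "qf n m' v = qf n m v - s * cnj s"
      proof -
        have "qf n m' v = qf n m v - (\<Sum>a<n. \<Sum>b<n. (cnj (v a) * w a) * (cnj (w b) * v b))"
          unfolding qf_def m'_def by (simp add: algebra_simps sum_subtractf)
        also have "(\<Sum>a<n. \<Sum>b<n. (cnj (v a) * w a) * (cnj (w b) * v b)) = s * cnj s"
        proof -
          have cc: "\<And>b. cnj (w b) * v b = cnj (cnj (v b) * w b)" by (simp add: mult.commute)
          show ?thesis unfolding cc s_def cnj_sum sum_product by (rule refl)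
        qed
        finally show ?thesis .
      qed
      have sum1: "(\<Sum>a<n. cnj (v a) * m a k) = of_real r * s"
        unfolding s_def w_def using rpos by (simp add: sum_distrib_left field_simps)
      have "(\<Sum>b<n. m k b * v b) = (\<Sum>b<n. cnj (m b k) * v b)"
      proof (rule sum.cong[OF refl])
        fix b assume "b \<in> {..<n}"
        then show "m k b * v b = cnj (m b k) * v b" using herm[of k b] kn by simp
      qed
      also have "\<dots> = of_real r * cnj s"
        unfolding s_def w_def using rpos by (simp add: cnj_sum sum_distrib_left field_simps)
      finally have sum2: "(\<Sum>b<n. m k b * v b) = of_real r * cnj s" .
      have "qf n m (\<lambda>a. v a + t * (if a = k then 1 else 0)) = qf n m v + cnj t * (of_real r * cnj s) + t * (of_real r * s) + cnj t * t * of_real (r^2)"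
        using qf_add_delta[OF kn] sum1 sum2 mkk by simp
      also have "\<dots> = qf n m v - s * cnj s" unfolding t_def using rpos by (simp add: field_simps power2_eq_square)
      finally show "0 \<le> qf n m' v" using q' Suc.prems(2) unfolding psdf_def by metis
    qed
    have wz: "\<And>c. c < n \<Longrightarrow> Suc k \<le> c \<Longrightarrow> w c = 0" unfolding w_def using Suc.prems(3) kn by auto
    have z': "\<forall>a b. a < n \<longrightarrow> b < n \<longrightarrow> (k \<le> a \<or> k \<le> b) \<longrightarrow> m' a b = 0"
    proof (intro allI impI)
      fix a b assume ab: "a < n" "b < n" "k \<le> a \<or> k \<le> b"
      show "m' a b = 0"
      proof (cases "a = k")
        case True
        have "m' k b = m k b - (m k k / of_real r) * cnj (m b k / of_real r)" unfolding m'_def w_def by simp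
        also have "\<dots> = m k b - cnj (m b k)" using mkk rpos by (simp add: field_simps power2_eq_square)
        also have "\<dots> = 0" using herm[OF ab(2) kn] by simp
        finally show ?thesis using True by simp
      next
        case na: False
        show ?thesis
        proof (cases "b = k")
          case True
          have "m' a k = m a k - (m a k / of_real r) * cnj (m k k / of_real r)" unfolding m'_def w_def by simp
          also have "\<dots> = 0" using mkk rpos by (simp add: field_simps power2_eq_square)
          finally show ?thesis using True by simp
        next
          case nb: False
          then have "Suc k \<le> a \<or> Suc k \<le> b" using ab(3) na by auto
          then show ?thesis unfolding m'_def using Suc.prems(3) ab wz by auto
        qed
      qed
    qed
    obtain u where u: "\<forall>a<n. \<forall>b<n. m' a b = (\<Sum>i<k. u i a * cnj (u i b))"
      using Suc.IH[OF _ psd' z'] kn by auto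
    define u' where "u' = u(k := w)"
    have e: "\<And>a b. (\<Sum>i<k. u' i a * cnj (u' i b)) = (\<Sum>i<k. u i a * cnj (u i b))"
      unfolding u'_def by (rule sum.cong) auto
    have uk: "u' k = w" unfolding u'_def by simp
    have "\<forall>a<n. \<forall>b<n. m a b = (\<Sum>i<Suc k. u' i a * cnj (u' i b))"
    proof (intro allI impI)
      fix a b assume "a < n" "b < n"
      then have "m a b = m' a b + w a * cnj (w b)" unfolding m'_def by simp
      then show "m a b = (\<Sum>i<Suc k. u' i a * cnj (u' i b))"
        using u \<open>a < n\<close> \<open>b < n\<close> by (simp add: e uk)
    qed
    then show ?thesis by blast
  qed
qed

lemma chol: "psdf n m \<Longrightarrow> \<exists>u. \<forall>a<n. \<forall>b<n. m a b = (\<Sum>i<n. u i a * cnj (u i b))"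
  using chol_aux[of n n m] by auto

lemma sum_blocks: fixes n k :: nat shows "(\<Sum>j<n*k. g j) = (\<Sum>p<n. \<Sum>a<k. g (p*k + a))"
proof -
  have "(\<Sum>j<n*k. g j) = (\<Sum>m<n. sum g {m*k..<m*k+k})" by (rule sum.nat_group[symmetric])
  also have "\<dots> = (\<Sum>p<n. \<Sum>a<k. g (p*k + a))"
  proof (rule sum.cong[OF refl])
    fix p
    show "sum g {p * k..<p * k + k} = (\<Sum>a<k. g (p * k + a))"
      using sum.shift_bounds_nat_ivl[of g 0 "p*k" k] by (simp add: atLeast0LessThan add.commute)
  qed
  finally show ?thesis .
qed

lemma sw4: "(\<Sum>p\<in>P. \<Sum>q\<in>Q. \<Sum>a\<in>A. \<Sum>b\<in>B. f p q a b) = (\<Sum>a\<in>A. \<Sum>b\<in>B. \<Sum>p\<in>P. \<Sum>q\<in>Q. f p q a b)"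
proof -
  have "(\<Sum>p\<in>P. \<Sum>q\<in>Q. \<Sum>a\<in>A. \<Sum>b\<in>B. f p q a b) = (\<Sum>p\<in>P. \<Sum>a\<in>A. \<Sum>q\<in>Q. \<Sum>b\<in>B. f p q a b)"
    by (rule sum.cong[OF refl], rule sum.swap)
  also have "\<dots> = (\<Sum>a\<in>A. \<Sum>p\<in>P. \<Sum>q\<in>Q. \<Sum>b\<in>B. f p q a b)" by (rule sum.swap)
  also have "\<dots> = (\<Sum>a\<in>A. \<Sum>p\<in>P. \<Sum>b\<in>B. \<Sum>q\<in>Q. f p q a b)"
    by (rule sum.cong[OF refl], rule sum.cong[OF refl], rule sum.swap)
  also have "\<dots> = (\<Sum>a\<in>A. \<Sum>b\<in>B. \<Sum>p\<in>P. \<Sum>q\<in>Q. f p q a b)"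
    by (rule sum.cong[OF refl], rule sum.swap)
  finally show ?thesis .
qed

lemma cs_real:
  fixes x y :: "'a \<Rightarrow> real"
  shows "(\<Sum>i\<in>A. x i * y i)^2 \<le> (\<Sum>i\<in>A. (x i)^2) * (\<Sum>i\<in>A. (y i)^2)"
proof -
  have e1: "(\<Sum>i\<in>A. \<Sum>j\<in>A. (x i)^2 * (y j)^2) = (\<Sum>i\<in>A. (x i)^2) * (\<Sum>i\<in>A. (y i)^2)"
    by (simp add: sum_product)
  have e2: "(\<Sum>i\<in>A. \<Sum>j\<in>A. (x j)^2 * (y i)^2) = (\<Sum>i\<in>A. (x i)^2) * (\<Sum>i\<in>A. (y i)^2)"
    using e1 by (subst sum.swap) (simp add: mult.commute)
  have e3: "(\<Sum>i\<in>A. \<Sum>j\<in>A. (x i * y i) * (x j * y j)) = (\<Sum>i\<in>A. x i * y i)^2"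
    by (simp add: sum_product power2_eq_square)
  have "(\<Sum>i\<in>A. \<Sum>j\<in>A. (x i * y j - x j * y i)^2)
      = (\<Sum>i\<in>A. \<Sum>j\<in>A. (x i)^2 * (y j)^2 + (x j)^2 * (y i)^2 - 2 * ((x i * y i) * (x j * y j)))"
    by (rule sum.cong[OF refl], rule sum.cong[OF refl]) (simp add: power2_eq_square algebra_simps)
  also have "\<dots> = (\<Sum>i\<in>A. \<Sum>j\<in>A. (x i)^2 * (y j)^2) + (\<Sum>i\<in>A. \<Sum>j\<in>A. (x j)^2 * (y i)^2) - 2 * (\<Sum>i\<in>A. \<Sum>j\<in>A. (x i * y i) * (x j * y j))"
    by (simp only: sum.distrib sum_subtractf sum_distrib_left[symmetric])
  also have "\<dots> = 2 * ((\<Sum>i\<in>A. (x i)^2) * (\<Sum>i\<in>A. (y i)^2)) - 2 * (\<Sum>i\<in>A. x i * y i)^2"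
    unfolding e1 e2 e3 by simp
  finally have eq: "(\<Sum>i\<in>A. \<Sum>j\<in>A. (x i * y j - x j * y i)^2) = 2 * ((\<Sum>i\<in>A. (x i)^2) * (\<Sum>i\<in>A. (y i)^2)) - 2 * (\<Sum>i\<in>A. x i * y i)^2" .
  have nn: "0 \<le> (\<Sum>i\<in>A. \<Sum>j\<in>A. (x i * y j - x j * y i)^2)" by (intro sum_nonneg) simp
  show ?thesis using nn unfolding eq by simp
qed

lemma cs_cmod:
  fixes f g :: "'a \<Rightarrow> complex"
  shows "(cmod (\<Sum>i\<in>A. f i * g i))^2 \<le> (\<Sum>i\<in>A. (cmod (f i))^2) * (\<Sum>i\<in>A. (cmod (g i))^2)"
proof -
  have "cmod (\<Sum>i\<in>A. f i * g i) \<le> (\<Sum>i\<in>A. cmod (f i) * cmod (g i))"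
    by (metis (no_types, lifting) norm_mult norm_sum sum.cong)
  then have "(cmod (\<Sum>i\<in>A. f i * g i))^2 \<le> (\<Sum>i\<in>A. cmod (f i) * cmod (g i))^2"
    by (simp add: power_mono)
  also have "\<dots> \<le> (\<Sum>i\<in>A. (cmod (f i))^2) * (\<Sum>i\<in>A. (cmod (g i))^2)" by (rule cs_real)
  finally show ?thesis .
qed

lemma pair_nonneg:
  assumes "psdf d r" "psdf d w"
  shows "0 \<le> (\<Sum>a<d. \<Sum>b<d. r a b * w a b)"
proof -
  obtain u where u: "\<forall>a<d. \<forall>b<d. r a b = (\<Sum>i<d. u i a * cnj (u i b))" using chol[OF assms(1)] by blast
  have "(\<Sum>a<d. \<Sum>b<d. r a b * w a b) = (\<Sum>a<d. \<Sum>b<d. \<Sum>i<d. cnj (cnj (u i a)) * w a b * cnj (u i b))"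
  proof (rule sum.cong[OF refl], rule sum.cong[OF refl])
    fix a b assume "a \<in> {..<d}" "b \<in> {..<d}"
    then show "r a b * w a b = (\<Sum>i<d. cnj (cnj (u i a)) * w a b * cnj (u i b))"
      using u by (simp add: sum_distrib_left sum_distrib_right mult_ac)
  qed
  also have "\<dots> = (\<Sum>a<d. \<Sum>i<d. \<Sum>b<d. cnj (cnj (u i a)) * w a b * cnj (u i b))"
    by (rule sum.cong[OF refl], rule sum.swap)
  also have "\<dots> = (\<Sum>i<d. \<Sum>a<d. \<Sum>b<d. cnj (cnj (u i a)) * w a b * cnj (u i b))"
    by (rule sum.swap)
  also have "\<dots> = (\<Sum>i<d. qf d w (\<lambda>a. cnj (u i a)))" unfolding qf_def by (rule refl)
  also have "\<dots> \<ge> 0" using assms(2) unfolding psdf_def by (intro sum_nonneg) auto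
  finally show ?thesis .
qed

definition Jm :: "nat \<Rightarrow> complex mat \<Rightarrow> opmap" where
  "Jm d R Z = mat 1 1 (\<lambda>_. \<Sum>a<d. \<Sum>b<d. R $$ (a,b) * Z $$ (a,b))"

lemma Jm_00: "Jm d R Z $$ (0,0) = (\<Sum>a<d. \<Sum>b<d. R $$ (a,b) * Z $$ (a,b))"
  unfolding Jm_def by simp

lemma Jm_carrier: "Jm d R Z \<in> carrier_mat 1 1" unfolding Jm_def by simp

lemma Jm_add2:
  assumes "X \<in> carrier_mat d d" "Y \<in> carrier_mat d d"
  shows "Jm d R (X + Y) = Jm d R X + Jm d R Y"
proof (rule eq_matI)
  have "(\<Sum>a<d. \<Sum>b<d. R $$ (a,b) * (X + Y) $$ (a,b)) = (\<Sum>a<d. \<Sum>b<d. R $$ (a,b) * X $$ (a,b) + R $$ (a,b) * Y $$ (a,b))"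
    using assms by (intro sum.cong refl) (auto simp: algebra_simps)
  then show "\<And>i j. i < dim_row (Jm d R X + Jm d R Y) \<Longrightarrow> j < dim_col (Jm d R X + Jm d R Y) \<Longrightarrow>
      Jm d R (X + Y) $$ (i, j) = (Jm d R X + Jm d R Y) $$ (i, j)"
    by (simp add: Jm_def sum.distrib)
qed (auto simp: Jm_def)

lemma Jm_smult2:
  assumes "X \<in> carrier_mat d d"
  shows "Jm d R (c \<cdot>\<^sub>m X) = c \<cdot>\<^sub>m Jm d R X"
proof (rule eq_matI)
  have "(\<Sum>a<d. \<Sum>b<d. R $$ (a,b) * (c \<cdot>\<^sub>m X) $$ (a,b)) = (\<Sum>a<d. \<Sum>b<d. c * (R $$ (a,b) * X $$ (a,b)))"
    using assms by (intro sum.cong refl) (auto simp: algebra_simps)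
  then show "\<And>i j. i < dim_row (c \<cdot>\<^sub>m Jm d R X) \<Longrightarrow> j < dim_col (c \<cdot>\<^sub>m Jm d R X) \<Longrightarrow>
      Jm d R (c \<cdot>\<^sub>m X) $$ (i, j) = (c \<cdot>\<^sub>m Jm d R X) $$ (i, j)"
    by (simp add: Jm_def sum_distrib_left)
qed (auto simp: Jm_def)

lemma Jm_add1:
  assumes "X \<in> carrier_mat d d" "Y \<in> carrier_mat d d"
  shows "Jm d (X + Y) Z = Jm d X Z + Jm d Y Z"
proof (rule eq_matI)
  have "(\<Sum>a<d. \<Sum>b<d. (X + Y) $$ (a,b) * Z $$ (a,b)) = (\<Sum>a<d. \<Sum>b<d. X $$ (a,b) * Z $$ (a,b) + Y $$ (a,b) * Z $$ (a,b))"
    using assms by (intro sum.cong refl) (auto simp: algebra_simps)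
  then show "\<And>i j. i < dim_row (Jm d X Z + Jm d Y Z) \<Longrightarrow> j < dim_col (Jm d X Z + Jm d Y Z) \<Longrightarrow>
      Jm d (X + Y) Z $$ (i, j) = (Jm d X Z + Jm d Y Z) $$ (i, j)"
    by (simp add: Jm_def sum.distrib)
qed (auto simp: Jm_def)

lemma Jm_smult1:
  assumes "X \<in> carrier_mat d d"
  shows "Jm d (c \<cdot>\<^sub>m X) Z = c \<cdot>\<^sub>m Jm d X Z"
proof (rule eq_matI)
  have "(\<Sum>a<d. \<Sum>b<d. (c \<cdot>\<^sub>m X) $$ (a,b) * Z $$ (a,b)) = (\<Sum>a<d. \<Sum>b<d. c * (X $$ (a,b) * Z $$ (a,b)))"
    using assms by (intro sum.cong refl) (auto simp: algebra_simps)
  then show "\<And>i j. i < dim_row (c \<cdot>\<^sub>m Jm d X Z) \<Longrightarrow> j < dim_col (c \<cdot>\<^sub>m Jm d X Z) \<Longrightarrow>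
      Jm d (c \<cdot>\<^sub>m X) Z $$ (i, j) = (c \<cdot>\<^sub>m Jm d X Z) $$ (i, j)"
    by (simp add: Jm_def sum_distrib_left)
qed (auto simp: Jm_def)

lemma Jm_lin: "lin_on d (Jm d R)"
  unfolding lin_on_def using Jm_add2 Jm_smult2 by blast

lemma W_psdf:
  assumes Z: "psdf (k*d) z" and d: "d > 0"
  shows "psdf d (\<lambda>a b. \<Sum>p<k. \<Sum>q<k. cnj (v p) * v q * z (p*d+a) (q*d+b))"
  unfolding psdf_def
proof
  fix y :: "nat \<Rightarrow> complex"
  define x where "x j = v (j div d) * y (j mod d)" for j
  have xe: "\<And>p a. a < d \<Longrightarrow> x (p*d+a) = v p * y a" unfolding x_def using d by simp
  have "qf (k*d) z x = (\<Sum>p<k. \<Sum>a<d. \<Sum>q<k. \<Sum>b<d. cnj (x (p*d+a)) * z (p*d+a) (q*d+b) * x (q*d+b))"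
    unfolding qf_def sum_blocks by (rule refl)
  also have "\<dots> = (\<Sum>p<k. \<Sum>a<d. \<Sum>q<k. \<Sum>b<d. cnj (y a) * (cnj (v p) * v q * z (p*d+a) (q*d+b)) * y b)"
    by (intro sum.cong refl) (simp add: xe mult_ac)
  also have "\<dots> = (\<Sum>p<k. \<Sum>q<k. \<Sum>a<d. \<Sum>b<d. cnj (y a) * (cnj (v p) * v q * z (p*d+a) (q*d+b)) * y b)"
    by (rule sum.cong[OF refl], rule sum.swap)
  also have "\<dots> = (\<Sum>a<d. \<Sum>b<d. \<Sum>p<k. \<Sum>q<k. cnj (y a) * (cnj (v p) * v q * z (p*d+a) (q*d+b)) * y b)"
    by (rule sw4)
  also have "\<dots> = qf d (\<lambda>a b. \<Sum>p<k. \<Sum>q<k. cnj (v p) * v q * z (p*d+a) (q*d+b)) y"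
    unfolding qf_def by (simp add: sum_distrib_left sum_distrib_right)
  finally show "0 \<le> qf d (\<lambda>a b. \<Sum>p<k. \<Sum>q<k. cnj (v p) * v q * z (p*d+a) (q*d+b)) y"
    using Z unfolding psdf_def by metis
qed

lemma Jm_psd_out:
  assumes R: "psdf d (\<lambda>a b. R $$ (a,b))" and Z: "psd (k*d) Z" and d: "d > 0"
  shows "psd (k*1) (app_right k d 1 (Jm d R) Z)"
proof -
  define OM where "OM = app_right k d 1 (Jm d R) Z"
  have Oc: "OM \<in> carrier_mat (k*1) (k*1)" unfolding OM_def by (simp add: app_right_def)
  have Oe: "OM $$ (p,q) = (\<Sum>a<d. \<Sum>b<d. R$$(a,b) * Z$$(p*d+a, q*d+b))" if "p<k" "q<k" for p q
  proof -
    have "OM $$ (p,q) = Jm d R (rblock d Z p q) $$ (0,0)" unfolding OM_def app_right_def using that by simp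
    also have "\<dots> = (\<Sum>a<d. \<Sum>b<d. R$$(a,b) * Z$$(p*d+a, q*d+b))"
      unfolding Jm_00 by (intro sum.cong refl) (simp add: rblock_def)
    finally show ?thesis .
  qed
  have Zp: "psdf (k*d) (\<lambda>i j. Z $$ (i,j))" using Z psd_iff by blast
  have "psdf k (\<lambda>p q. OM $$ (p,q))"
    unfolding psdf_def
  proof
    fix v :: "nat \<Rightarrow> complex"
    have "qf k (\<lambda>p q. OM $$ (p,q)) v = (\<Sum>p<k. \<Sum>q<k. cnj (v p) * (\<Sum>a<d. \<Sum>b<d. R$$(a,b) * Z$$(p*d+a, q*d+b)) * v q)"
      unfolding qf_def by (intro sum.cong refl) (simp add: Oe)
    also have "\<dots> = (\<Sum>p<k. \<Sum>q<k. \<Sum>a<d. \<Sum>b<d. R$$(a,b) * (cnj (v p) * v q * Z$$(p*d+a, q*d+b)))"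
      by (simp add: sum_distrib_left sum_distrib_right mult_ac)
    also have "\<dots> = (\<Sum>a<d. \<Sum>b<d. \<Sum>p<k. \<Sum>q<k. R$$(a,b) * (cnj (v p) * v q * Z$$(p*d+a, q*d+b)))"
      by (rule sw4)
    also have "\<dots> = (\<Sum>a<d. \<Sum>b<d. R$$(a,b) * (\<Sum>p<k. \<Sum>q<k. cnj (v p) * v q * Z$$(p*d+a, q*d+b)))"
      by (simp add: sum_distrib_left)
    finally have e: "qf k (\<lambda>p q. OM $$ (p,q)) v = \<dots>" .
    show "0 \<le> qf k (\<lambda>p q. OM $$ (p,q)) v"
      unfolding e by (rule pair_nonneg[OF R W_psdf[OF Zp d]])
  qed
  then show ?thesis using Oc unfolding OM_def psd_iff by simp
qed

lemma Re_mult_cnj: "Re (w * cnj w) = (cmod w)^2"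
  using cmod_power2[of w] by (simp add: power2_eq_square)

lemma Jm_trace:
  assumes R: "psdf d r" "Re (\<Sum>a<d. r a a) = 1" and X: "psdf d x"
  shows "Re (\<Sum>a<d. \<Sum>b<d. r a b * x a b) \<le> Re (\<Sum>a<d. x a a)"
proof -
  obtain u where u: "\<forall>a<d. \<forall>b<d. r a b = (\<Sum>i<d. u i a * cnj (u i b))" using chol[OF R(1)] by blast
  obtain z where z: "\<forall>a<d. \<forall>b<d. x a b = (\<Sum>i<d. z i a * cnj (z i b))" using chol[OF X] by blast
  define c where "c i j = (\<Sum>a<d. u i a * z j a)" for i j
  have "(\<Sum>i<d. \<Sum>j<d. c i j * cnj (c i j)) = (\<Sum>i<d. \<Sum>j<d. \<Sum>a<d. \<Sum>b<d. (u i a * cnj (u i b)) * (z j a * cnj (z j b)))"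
    unfolding c_def cnj_sum sum_product by (intro sum.cong refl) (simp add: mult_ac)
  also have "\<dots> = (\<Sum>a<d. \<Sum>b<d. \<Sum>i<d. \<Sum>j<d. (u i a * cnj (u i b)) * (z j a * cnj (z j b)))"
    by (rule sw4)
  also have "\<dots> = (\<Sum>a<d. \<Sum>b<d. r a b * x a b)"
    using u z by (intro sum.cong refl) (simp add: sum_product)
  finally have e: "(\<Sum>a<d. \<Sum>b<d. r a b * x a b) = (\<Sum>i<d. \<Sum>j<d. c i j * cnj (c i j))" by simp
  define U where "U i = (\<Sum>a<d. (cmod (u i a))^2)" for i
  define V where "V j = (\<Sum>a<d. (cmod (z j a))^2)" for j
  have "Re (\<Sum>a<d. \<Sum>b<d. r a b * x a b) = (\<Sum>i<d. \<Sum>j<d. (cmod (c i j))^2)"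
    unfolding e Re_sum Re_mult_cnj by (rule refl)
  also have "\<dots> \<le> (\<Sum>i<d. \<Sum>j<d. U i * V j)"
    unfolding c_def U_def V_def by (intro sum_mono cs_cmod)
  also have "\<dots> = (\<Sum>i<d. U i) * (\<Sum>j<d. V j)" by (simp add: sum_product)
  also have "(\<Sum>i<d. U i) = Re (\<Sum>a<d. r a a)"
  proof -
    have "(\<Sum>a<d. r a a) = (\<Sum>a<d. \<Sum>i<d. u i a * cnj (u i a))"
      using u by (intro sum.cong refl) simp
    note tt = this
    have "Re (\<Sum>a<d. r a a) = (\<Sum>a<d. \<Sum>i<d. (cmod (u i a))^2)"
      unfolding tt Re_sum Re_mult_cnj by (rule refl)
    moreover have "(\<Sum>i<d. U i) = (\<Sum>a<d. \<Sum>i<d. (cmod (u i a))^2)"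
      unfolding U_def by (rule sum.swap)
    ultimately show ?thesis by simp
  qed
  also have "(\<Sum>j<d. V j) = Re (\<Sum>a<d. x a a)"
  proof -
    have "(\<Sum>a<d. x a a) = (\<Sum>a<d. \<Sum>i<d. z i a * cnj (z i a))"
      using z by (intro sum.cong refl) simp
    note tt = this
    have "Re (\<Sum>a<d. x a a) = (\<Sum>a<d. \<Sum>i<d. (cmod (z i a))^2)"
      unfolding tt Re_sum Re_mult_cnj by (rule refl)
    moreover have "(\<Sum>i<d. V i) = (\<Sum>a<d. \<Sum>i<d. (cmod (z i a))^2)"
      unfolding V_def by (rule sum.swap)
    ultimately show ?thesis by simp
  qed
  finally show ?thesis using R(2) by simp
qed

lemma Jm_cptni:
  assumes R: "density d R" and d: "d > 0"
  shows "cptni d 1 (Jm d R)"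
proof -
  have Rc: "R \<in> carrier_mat d d" and Rp: "psdf d (\<lambda>a b. R $$ (a,b))" and Rt: "tr R = 1"
    using R unfolding density_def psd_iff by auto
  have Rt': "Re (\<Sum>a<d. R $$ (a,a)) = 1" using Rt Rc unfolding tr_def by simp
  have cp: "cp_map d 1 (Jm d R)"
    unfolding cp_map_def using Jm_lin Jm_carrier Jm_psd_out[OF Rp _ d] by blast
  have trb: "Re (tr (Jm d R X)) \<le> Re (tr X)" if X: "psd d X" for X
  proof -
    have Xc: "X \<in> carrier_mat d d" and Xp: "psdf d (\<lambda>a b. X $$ (a,b))" using X psd_iff by auto
    have "tr (Jm d R X) = (\<Sum>a<d. \<Sum>b<d. R $$ (a,b) * X $$ (a,b))"
      unfolding tr_def Jm_def by simp
    moreover have "tr X = (\<Sum>a<d. X $$ (a,a))" unfolding tr_def using Xc by simp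
    ultimately show ?thesis using Jm_trace[OF Rp Rt' Xp] by simp
  qed
  show ?thesis unfolding cptni_def using cp trb by blast
qed

lemma idx_lt: assumes "p < d" "a < (d::nat)" shows "p*d + a < d*d"
proof -
  have "Suc p * d \<le> d * d" using mult_le_mono1[of "Suc p" d d] assms by simp
  then show ?thesis using assms by simp
qed

lemma dm: assumes "a < (d::nat)" shows "(p*d+a) div d = p" "(p*d+a) mod d = a"
  using assms by simp_all

definition mx :: "nat \<Rightarrow> complex mat" where
  "mx d = mat (d*d) (d*d) (\<lambda>(i,j). if i div d = i mod d \<and> j div d = j mod d then 1 / of_nat d else 0)"

lemma mx_density:
  assumes d: "d > 0"
  shows "density (d*d) (mx d)"
proof -
  define f :: "nat \<Rightarrow> complex" where "f i = (if i div d = i mod d then 1 else 0)" for i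
  have ent: "mx d $$ (i,j) = f i * f j / of_nat d" if "i < d*d" "j < d*d" for i j
    unfolding mx_def f_def using that by simp
  have "tr (mx d) = (\<Sum>i<d*d. mx d $$ (i,i))" unfolding tr_def mx_def by simp
  also have "\<dots> = (\<Sum>i<d*d. f i * f i / of_nat d)"
    by (intro sum.cong refl) (simp add: ent)
  also have "\<dots> = (\<Sum>p<d. \<Sum>a<d. f (p*d+a) * f (p*d+a) / of_nat d)" by (rule sum_blocks)
  also have "\<dots> = (\<Sum>p<d. \<Sum>a<d. if a = p then 1 / of_nat d else 0)"
    by (intro sum.cong refl) (auto simp: f_def dm)
  also have "\<dots> = 1" using d by simp
  finally have tr1: "tr (mx d) = 1" .
  have "psdf (d*d) (\<lambda>i j. mx d $$ (i,j))"
    unfolding psdf_def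
  proof
    fix v :: "nat \<Rightarrow> complex"
    define S where "S = (\<Sum>j<d*d. f j * v j)"
    have cf: "\<And>i. cnj (f i) = f i" unfolding f_def by simp
    have "qf (d*d) (\<lambda>i j. mx d $$ (i,j)) v = (\<Sum>i<d*d. \<Sum>j<d*d. (cnj (v i) * f i) * (f j * v j) / of_nat d)"
      unfolding qf_def by (intro sum.cong refl) (simp add: ent mult_ac)
    also have "\<dots> = (\<Sum>i<d*d. cnj (v i) * f i) * S / of_nat d"
      unfolding S_def by (simp add: sum_product sum_divide_distrib)
    also have "(\<Sum>i<d*d. cnj (v i) * f i) = cnj S"
      unfolding S_def cnj_sum by (simp add: cf mult.commute)
    also have "cnj S * S / of_nat d = of_real ((cmod S)^2 / real d)"
      using complex_norm_square[of S] by (simp add: mult.commute)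
    finally show "0 \<le> qf (d*d) (\<lambda>i j. mx d $$ (i,j)) v"
      by (simp add: less_eq_complex_def)
  qed
  then show ?thesis unfolding density_def psd_iff using tr1 by (simp add: mx_def)
qed

lemma mx_app:
  assumes R: "R \<in> carrier_mat d d" and d: "d > 0"
  shows "app_right d d 1 (Jm d R) (mx d) = (1 / of_nat d) \<cdot>\<^sub>m R"
proof (rule eq_matI)
  fix p q assume pq: "p < dim_row ((1 / of_nat d) \<cdot>\<^sub>m R)" "q < dim_col ((1 / of_nat d) \<cdot>\<^sub>m R)"
  then have p: "p < d" and q: "q < d" using R by auto
  have "app_right d d 1 (Jm d R) (mx d) $$ (p,q) = Jm d R (rblock d (mx d) p q) $$ (0,0)"
    unfolding app_right_def using p q by simp
  also have "\<dots> = (\<Sum>a<d. \<Sum>b<d. if a = p \<and> b = q then R $$ (a,b) / of_nat d else 0)"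
    unfolding Jm_00 using p q by (intro sum.cong refl) (auto simp: rblock_def mx_def idx_lt dm)
  also have "\<dots> = (\<Sum>a<d. if a = p then R $$ (p,q) / of_nat d else 0)"
  proof (rule sum.cong[OF refl])
    fix a show "(\<Sum>b<d. if a = p \<and> b = q then R $$ (a,b) / of_nat d else 0) = (if a = p then R $$ (p,q) / of_nat d else 0)"
      using q by (cases "a = p") auto
  qed
  also have "\<dots> = ((1 / of_nat d) \<cdot>\<^sub>m R) $$ (p,q)" using p q R by simp
  finally show "app_right d d 1 (Jm d R) (mx d) $$ (p,q) = ((1 / of_nat d) \<cdot>\<^sub>m R) $$ (p,q)" .
qed (use R in \<open>auto simp: app_right_def\<close>)

lemma Jm_dims[simp]: "dim_row (Jm d R Z) = 1" "dim_col (Jm d R Z) = 1"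
  unfolding Jm_def by simp_all

lemma app_Jm_add:
  assumes "X \<in> carrier_mat d d" "Y \<in> carrier_mat d d"
  shows "app_right n d 1 (Jm d (X + Y)) W = app_right n d 1 (Jm d X) W + app_right n d 1 (Jm d Y) W"
  by (rule eq_matI) (auto simp: app_right_def Jm_add1[OF assms])

lemma app_Jm_smult:
  assumes "X \<in> carrier_mat d d"
  shows "app_right n d 1 (Jm d (c \<cdot>\<^sub>m X)) W = c \<cdot>\<^sub>m app_right n d 1 (Jm d X) W"
  by (rule eq_matI) (auto simp: app_right_def Jm_smult1[OF assms])

theorem proposition1:
  fixes star :: sotf
    and ext :: "nat \<Rightarrow> nat \<Rightarrow> nat \<Rightarrow> opmap \<Rightarrow> complex mat \<Rightarrow> complex mat"
  assumes "state_over_time_fun star"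
    and "axiom_E star ext"
  shows "state_linear star"
proof -
  have sot: "star dA dB E \<rho> \<in> carrier_mat (dA * dB) (dA * dB)"
    if h: "dA > 0" "dB > 0" "channel dA dB E" "density dA \<rho>" for dA dB E \<rho>
    using assms(1)[unfolded state_over_time_fun_def, rule_format, OF h] by (elim conjE)
  have E1: "ext dA dB 1 E (c \<cdot>\<^sub>m \<rho>) = c \<cdot>\<^sub>m star dA dB E \<rho>"
    if h: "dA > 0" "dB > 0" "channel dA dB E" "density dA \<rho>" for dA dB E \<rho> c
    by (rule assms(2)[unfolded axiom_E_def, THEN conjunct1, rule_format, OF h])
  have E2: "app_right (dA * dB) dE dE' I (ext dA dB dE E X) = ext dA dB dE' E (app_right dA dE dE' I X)"
    if h: "dA > 0" "dB > 0" "dE > 0" "channel dA dB E" "qsst star dA dE X" and h2: "dE' > 0" "cptni dE dE' I"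
    for dA dB dE E X dE' I
    by (rule assms(2)[unfolded axiom_E_def, THEN conjunct2, rule_format, OF h, THEN conjunct2, THEN conjunct1, rule_format, OF h2])
  show ?thesis unfolding state_linear_def
  proof (intro allI impI)
    fix dA dB E assume dA: "(0::nat) < dA" and dB: "(0::nat) < dB" and ch: "channel dA dB E"
    define W where "W = ext dA dB dA E (mx dA)"
    define L where "L Y = of_nat dA \<cdot>\<^sub>m app_right (dA*dB) dA 1 (Jm dA Y) W" for Y
    have q: "qsst star dA dA (mx dA)" unfolding qsst_def using mx_density[OF dA] by simp
    have key: "app_right (dA*dB) dA 1 (Jm dA \<rho>) W = (1 / of_nat dA) \<cdot>\<^sub>m star dA dB E \<rho>"
      if \<rho>: "density dA \<rho>" for \<rho>
    proof -
      have \<rho>c: "\<rho> \<in> carrier_mat dA dA" using \<rho> unfolding density_def psd_def by simp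
      have "app_right (dA*dB) dA 1 (Jm dA \<rho>) W = ext dA dB 1 E (app_right dA dA 1 (Jm dA \<rho>) (mx dA))"
        unfolding W_def by (rule E2[OF dA dB dA ch q _ Jm_cptni[OF \<rho> dA]]) simp
      also have "\<dots> = ext dA dB 1 E ((1 / of_nat dA) \<cdot>\<^sub>m \<rho>)" using mx_app[OF \<rho>c dA] by simp
      also have "\<dots> = (1 / of_nat dA) \<cdot>\<^sub>m star dA dB E \<rho>" using E1[OF dA dB ch \<rho>] by simp
      finally show ?thesis .
    qed
    have lin: "lin_on dA L"
      unfolding lin_on_def
    proof (intro conjI ballI allI)
      fix X Y :: "complex mat" assume X: "X \<in> carrier_mat dA dA" and Y: "Y \<in> carrier_mat dA dA"
      show "L (X + Y) = L X + L Y"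
        unfolding L_def app_Jm_add[OF X Y]
        by (rule eq_matI) (auto simp: app_right_def algebra_simps)
    next
      fix X :: "complex mat" and c :: complex assume X: "X \<in> carrier_mat dA dA"
      show "L (c \<cdot>\<^sub>m X) = c \<cdot>\<^sub>m L X"
        unfolding L_def app_Jm_smult[OF X]
        by (rule eq_matI) (auto simp: app_right_def algebra_simps)
    qed
    have hom: "L (c \<cdot>\<^sub>m \<rho>) = c \<cdot>\<^sub>m star dA dB E \<rho>" if \<rho>: "density dA \<rho>" for \<rho> c
    proof -
      have \<rho>c: "\<rho> \<in> carrier_mat dA dA" using \<rho> unfolding density_def psd_def by simp
      have Sc: "star dA dB E \<rho> \<in> carrier_mat (dA * dB) (dA * dB)" using sot[OF dA dB ch \<rho>] .
      have "L (c \<cdot>\<^sub>m \<rho>) = of_nat dA \<cdot>\<^sub>m (c \<cdot>\<^sub>m ((1 / of_nat dA) \<cdot>\<^sub>m star dA dB E \<rho>))"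
        unfolding L_def app_Jm_smult[OF \<rho>c] key[OF \<rho>] by (rule refl)
      also have "\<dots> = c \<cdot>\<^sub>m star dA dB E \<rho>"
        by (rule eq_matI) (use Sc dA in auto)
      finally show ?thesis .
    qed
    show "\<exists>L. lin_on dA L \<and> (\<forall>\<rho> c. density dA \<rho> \<longrightarrow> L (c \<cdot>\<^sub>m \<rho>) = c \<cdot>\<^sub>m star dA dB E \<rho>)"
      using lin hom by blast
  qed
qed

end
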